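(* Let $n,\nu\in\mathbb{N}$ with $1\le\nu\le n$, and let $0=n_0<n_1<\cdots<n_\nu=n$ be integers. Let $m\ge 1$ and, for each $i\in\{1,\dots,m\}$, let $(r_i,a_i,d_i)$ be integers with $0\le a_i<d_i\le\nu$ and $0<r_i\le n_{d_i}-n_{a_i}$. Let $\bm h=(h_1,\dots,h_n)\in\mathbb{N}^n$ satisfy the block monotonicity condition: for every $\kappa\in\{1,\dots,\nu\}$, $h_i\ge h_j$ whenever $n_{\kappa-1}+1\le i<j\le n_\kappa$. Then $\bm h$ is adequate for the demand $(\bm r,\bm a,\bm d)$ if and only if $W_{k_1k_2\cdots k_\nu}(\bm h,\bm r,\bm a,\bm d)\ge 0$ for every integer tuple $(k_1,\dots,k_\nu)$ with $0\le k_\kappa\le n_\kappa-n_{\kappa-1}$ for all $\kappa$.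
   Context: The time horizon consists of $n$ slots; the integers $0=n_0<n_1<\dots<n_\nu=n$ are the admissible arrival times/deadlines. A load with service $(r,a,d)$ requires one unit of power in exactly $r$ of the slots $n_a+1,\dots,n_d$. The supply $\bm h$ is called adequate for the demand $(\bm r,\bm a,\bm d)=((r_i,a_i,d_i))_{i=1}^m$ if there exists an $m\times n$ matrix $A$ with entries in $\{0,1\}$ such that for all $i$: $\sum_{j=1}^n A(i,j)=r_i$ and $A(i,j)=0$ whenever $j\notin\{n_{a_i}+1,\dots,n_{d_i}\}$; and for all $j$: $\sum_{i=1}^m A(i,j)\le h_j$. For $[t]^+=\max\{t,0\}$, the structure tensor is defined, for integers $0\le k_\kappa\le n_\kappa-n_{\kappa-1}$ ($\kappa=1,\dots,\nu$), by $$W_{k_1\cdots k_\nu}(\bm h,\bm r,\bm a,\bm d)=\sum_{\kappa=1}^{\nu}\sum_{j=n_{\kappa-1}+k_\kappa+1}^{n_\kappa}h_j-\sum_{i=1}^m\Big[r_i-\sum_{\kappa=a_i+1}^{d_i}k_\kappa\Big]^+.$$ *)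

theory Defs
  imports Main
begin

text \<open>Conventions: breakpoints nb 0, ..., nb nu (nb 0 = 0, nb nu = n);
  supply h j for slots j = 1..n; loads i = 1..m with service (r i, a i, d i).\<close>

definition adequate ::
  "nat \<Rightarrow> nat \<Rightarrow> (nat \<Rightarrow> nat) \<Rightarrow> (nat \<Rightarrow> nat) \<Rightarrow> (nat \<Rightarrow> nat) \<Rightarrow> (nat \<Rightarrow> nat) \<Rightarrow> (nat \<Rightarrow> nat) \<Rightarrow> bool"
  where "adequate n m nb h r a d \<longleftrightarrow>
    (\<exists>A :: nat \<Rightarrow> nat \<Rightarrow> nat.
       (\<forall>i\<in>{1..m}. \<forall>j\<in>{1..n}. A i j \<in> {0, 1}) \<and>
       (\<forall>i\<in>{1..m}. (\<Sum>j=1..n. A i j) = r i) \<and>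
       (\<forall>i\<in>{1..m}. \<forall>j\<in>{1..n}. j \<notin> {nb (a i) + 1 .. nb (d i)} \<longrightarrow> A i j = 0) \<and>
       (\<forall>j\<in>{1..n}. (\<Sum>i=1..m. A i j) \<le> h j))"

definition structure_tensor ::
  "nat \<Rightarrow> nat \<Rightarrow> (nat \<Rightarrow> nat) \<Rightarrow> (nat \<Rightarrow> nat) \<Rightarrow> (nat \<Rightarrow> nat) \<Rightarrow> (nat \<Rightarrow> nat) \<Rightarrow> (nat \<Rightarrow> nat) \<Rightarrow> (nat \<Rightarrow> nat) \<Rightarrow> int"
  where "structure_tensor nu m nb k h r a d =
    (\<Sum>\<kappa>=1..nu. \<Sum>j=nb (\<kappa> - 1) + k \<kappa> + 1 .. nb \<kappa>. int (h j))
    - (\<Sum>i=1..m. max 0 (int (r i) - (\<Sum>\<kappa>=a i + 1 .. d i. int (k \<kappa>))))"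

end

theory Submission
  imports Defs
begin


definition rowc :: "(nat\<times>nat) set \<Rightarrow> nat \<Rightarrow> nat" where "rowc M i = card {j. (i,j)\<in>M}"
definition colc :: "(nat\<times>nat) set \<Rightarrow> nat \<Rightarrow> nat" where "colc M j = card {i. (i,j)\<in>M}"

lemma row_fin: "finite M \<Longrightarrow> finite {j. (i,j)\<in>M}"
  by (rule finite_subset[of _ "snd ` M"]) force+
lemma col_fin: "finite M \<Longrightarrow> finite {i. (i,j)\<in>M}"
  by (rule finite_subset[of _ "fst ` M"]) force+

lemma card_filter_sum: "finite A \<Longrightarrow> card {x\<in>A. P x} = (\<Sum>x\<in>A. if P x then 1 else 0)"
  by (simp add: sum.inter_filter[symmetric])

lemma double_count: "finite A \<Longrightarrow> finite B \<Longrightarrow>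
  (\<Sum>a\<in>A. card {b\<in>B. (a,b)\<in>S}) = (\<Sum>b\<in>B. card {a\<in>A. (a,b)\<in>S})"
  by (simp add: card_filter_sum sum.swap[of _ A B])

locale bip =
  fixes I J :: "nat set" and E :: "(nat\<times>nat) set" and h :: "nat \<Rightarrow> nat"
  assumes finI: "finite I" and finJ: "finite J" and EIJ: "E \<subseteq> I \<times> J"
begin

definition valid where "valid r M \<longleftrightarrow> M \<subseteq> E \<and> (\<forall>i\<in>I. rowc M i = r i) \<and> (\<forall>j\<in>J. colc M j \<le> h j)"
definition cond where "cond r \<longleftrightarrow> (\<forall>T\<subseteq>J. (\<Sum>i\<in>I. max 0 (int (r i) - int (card ({j. (i,j)\<in>E} - T)))) \<le> int (\<Sum>j\<in>T. h j))"

fun P :: "(nat\<times>nat) set \<Rightarrow> nat \<Rightarrow> nat \<Rightarrow> bool" where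
  "P M 0 x = (\<exists>j. (x,j)\<in>E \<and> (x,j)\<notin>M \<and> colc M j < h j)"
| "P M (Suc q) x = (P M q x \<or> (\<exists>j y. (x,j)\<in>E \<and> (x,j)\<notin>M \<and> (y,j)\<in>M \<and> P M q y))"

lemma finE: "finite E" using finite_subset[OF EIJ] finI finJ by blast

lemma valid_fin: "valid r M \<Longrightarrow> finite M"
  using finE unfolding valid_def by (auto intro: finite_subset)

lemma P_mono: "P M q x \<Longrightarrow> q \<le> q' \<Longrightarrow> P M q' x"
proof (induction q' )
  case 0 thus ?case by simp
next
  case (Suc q') thus ?case by (cases "q = Suc q'") auto
qed

lemma P_E: "P M q x \<Longrightarrow> \<exists>j. (x,j)\<in>E"
  by (induction q) auto

lemma ins_valid:
  assumes v: "valid r M" and lj: "(l,j)\<in>E" "(l,j)\<notin>M" and c: "colc M j < h j"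
  shows "valid (r(l := r l + 1)) (insert (l,j) M)"
proof -
  have fM: "finite M" using valid_fin[OF v] .
  have row: "rowc (insert (l,j) M) x = (if x = l then Suc (rowc M x) else rowc M x)" for x
  proof (cases "x = l")
    case True
    have "{j'. (x,j')\<in>insert (l,j) M} = insert j {j'. (x,j')\<in>M}" using True by auto
    thus ?thesis using True lj row_fin[OF fM] by (simp add: rowc_def)
  next
    case False
    have "{j'. (x,j')\<in>insert (l,j) M} = {j'. (x,j')\<in>M}" using False by auto
    thus ?thesis using False by (simp add: rowc_def)
  qed
  have col: "colc (insert (l,j) M) y = (if y = j then Suc (colc M y) else colc M y)" for y
  proof (cases "y = j")
    case True
    have "{i. (i,y)\<in>insert (l,j) M} = insert l {i. (i,y)\<in>M}" using True by auto
    thus ?thesis using True lj col_fin[OF fM] by (simp add: colc_def)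
  next
    case False
    have "{i. (i,y)\<in>insert (l,j) M} = {i. (i,y)\<in>M}" using False by auto
    thus ?thesis using False by (simp add: colc_def)
  qed
  show ?thesis using v lj c unfolding valid_def by (auto simp: row col)
qed

lemma swap_props:
  assumes fM: "finite M" and lj: "(l,j)\<notin>M" and yj: "(y,j)\<in>M" and ly: "l \<noteq> y"
  defines "M1 \<equiv> insert (l,j) (M - {(y,j)})"
  shows "colc M1 j' = colc M j'"
    and "rowc M1 x = (if x = l then Suc (rowc M x) else if x = y then rowc M x - 1 else rowc M x)"
proof -
  show "colc M1 j' = colc M j'"
  proof (cases "j' = j")
    case True
    have "{i. (i,j')\<in>M1} = insert l ({i. (i,j)\<in>M} - {y})" using True ly unfolding M1_def by auto
    moreover have "card {i. (i,j)\<in>M} > 0" using yj col_fin[OF fM] card_gt_0_iff by blast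
    ultimately show ?thesis using True lj yj col_fin[OF fM] by (simp add: colc_def)
  next
    case False
    have "{i. (i,j')\<in>M1} = {i. (i,j')\<in>M}" using False unfolding M1_def by auto
    thus ?thesis by (simp add: colc_def)
  qed
  show "rowc M1 x = (if x = l then Suc (rowc M x) else if x = y then rowc M x - 1 else rowc M x)"
  proof -
    consider "x = l" | "x = y" | "x \<noteq> l" "x \<noteq> y" by blast
    thus ?thesis
    proof cases
      case 1
      have "{j'. (x,j')\<in>M1} = insert j {j'. (x,j')\<in>M}" using 1 ly unfolding M1_def by auto
      thus ?thesis using 1 lj row_fin[OF fM] by (simp add: rowc_def)
    next
      case 2
      have "{j'. (x,j')\<in>M1} = {j'. (x,j')\<in>M} - {j}" using 2 ly unfolding M1_def by auto
      thus ?thesis using 2 ly yj row_fin[OF fM] by (simp add: rowc_def)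
    next
      case 3
      have "{j'. (x,j')\<in>M1} = {j'. (x,j')\<in>M}" using 3 unfolding M1_def by auto
      thus ?thesis using 3 by (simp add: rowc_def)
    qed
  qed
qed

lemma keep:
  assumes fM: "finite M" and lj: "(l,j)\<notin>M" and yj: "(y,j)\<in>M" and ly: "l \<noteq> y"
    and nP: "\<not> P M q l"
  defines "M1 \<equiv> insert (l,j) (M - {(y,j)})"
  shows "P M q' x \<Longrightarrow> q' \<le> q \<Longrightarrow> P M1 q' x \<or> (0 < q' \<and> P M (q'-1) y)"
proof (induction q' arbitrary: x)
  case 0
  then obtain j' where j': "(x,j')\<in>E" "(x,j')\<notin>M" "colc M j' < h j'" by auto
  have "x \<noteq> l" using 0 nP P_mono by blast
  hence "(x,j')\<notin>M1" using j' unfolding M1_def by auto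
  moreover have "colc M1 j' = colc M j'" unfolding M1_def by (rule swap_props(1)[OF fM lj yj ly])
  ultimately show ?case using j' by auto
next
  case (Suc q')
  have xl: "x \<noteq> l" using Suc.prems nP P_mono by blast
  from Suc.prems(1) consider "P M q' x" | j' z where "(x,j')\<in>E" "(x,j')\<notin>M" "(z,j')\<in>M" "P M q' z"
    by auto
  thus ?case
  proof cases
    case 1
    from Suc.IH[OF 1] Suc.prems(2) show ?thesis
      using P_mono[of M1 q' x "Suc q'"] P_mono[of M "q'-1" y q'] by auto
  next
    case 2
    show ?thesis
    proof (cases "z = y")
      case True thus ?thesis using 2 by auto
    next
      case False
      have "(z,j')\<in>M1" "(x,j')\<notin>M1" using 2 False xl unfolding M1_def by auto
      from Suc.IH[OF 2(4)] Suc.prems(2) show ?thesis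
        using P_mono[of M "q'-1" y q'] \<open>(z,j')\<in>M1\<close> \<open>(x,j')\<notin>M1\<close> 2(1) by auto
    qed
  qed
qed

lemma aug: "valid r M \<Longrightarrow> P M q l \<Longrightarrow> \<exists>M'. valid (r(l := r l + 1)) M'"
proof (induction q arbitrary: r M l)
  case 0
  then obtain j where "(l,j)\<in>E" "(l,j)\<notin>M" "colc M j < h j" by auto
  thus ?case using ins_valid[OF 0(1)] by blast
next
  case (Suc q)
  show ?case
  proof (cases "P M q l")
    case True thus ?thesis using Suc by blast
  next
    case False
    then obtain j y where jy: "(l,j)\<in>E" "(l,j)\<notin>M" "(y,j)\<in>M" "P M q y" using Suc.prems by auto
    have ly: "l \<noteq> y" using False jy by auto
    have fM: "finite M" using valid_fin[OF Suc.prems(1)] .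
    define q0 where "q0 = (LEAST q'. P M q' y)"
    have Pq0: "P M q0 y" unfolding q0_def using jy(4) by (rule LeastI)
    have q0q: "q0 \<le> q" unfolding q0_def using jy(4) by (rule Least_le)
    define M1 where "M1 = insert (l,j) (M - {(y,j)})"
    have "P M1 q0 y \<or> (0 < q0 \<and> P M (q0-1) y)"
      using keep[OF fM jy(2) jy(3) ly False Pq0 q0q] unfolding M1_def .
    moreover have "\<not> (0 < q0 \<and> P M (q0-1) y)"
    proof
      assume "0 < q0 \<and> P M (q0-1) y"
      hence "q0 \<le> q0 - 1" unfolding q0_def by (metis Least_le q0_def)
      moreover have "0 < q0" using \<open>0 < q0 \<and> P M (q0-1) y\<close> by blast
      ultimately show False by linarith
    qed
    ultimately have P1: "P M1 q y" using P_mono q0q by blast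
    have yI: "y \<in> I" and jJ: "j\<in>J" using jy(3) Suc.prems(1) EIJ unfolding valid_def by auto
    have lI: "l \<in> I" using jy(1) EIJ by auto
    have ry: "r y \<ge> 1"
    proof -
      have "card {j. (y,j)\<in>M} > 0" using jy(3) row_fin[OF fM] card_gt_0_iff by blast
      thus ?thesis using Suc.prems(1) yI unfolding valid_def rowc_def by auto
    qed
    define r1 where "r1 = r(l := r l + 1, y := r y - 1)"
    have v1: "valid r1 M1"
      unfolding valid_def
    proof (intro conjI ballI)
      show "M1 \<subseteq> E" using Suc.prems(1) jy unfolding valid_def M1_def by auto
      fix i assume "i\<in>I"
      thus "rowc M1 i = r1 i" using swap_props(2)[OF fM jy(2) jy(3) ly] Suc.prems(1) ly
        unfolding M1_def r1_def valid_def by auto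
    next
      fix j' assume "j'\<in>J"
      thus "colc M1 j' \<le> h j'" using swap_props(1)[OF fM jy(2) jy(3) ly] Suc.prems(1)
        unfolding M1_def valid_def by auto
    qed
    from Suc.IH[OF v1 P1] obtain M' where "valid (r1(y := r1 y + 1)) M'" by blast
    moreover have "r1(y := r1 y + 1) = r(l := r l + 1)"
      using ry ly unfolding r1_def by (auto simp: fun_eq_iff)
    ultimately show ?thesis by metis
  qed
qed

lemma Ei_fin: "finite {j. (i,j)\<in>E}" using row_fin[OF finE] .

lemma easy: assumes v: "valid r M" shows "cond r"
  unfolding cond_def
proof (intro allI impI)
  fix T assume TJ: "T \<subseteq> J"
  have fM: "finite M" using valid_fin[OF v] .
  have MIJ: "M \<subseteq> I \<times> J" using v EIJ unfolding valid_def by auto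
  have fT: "finite T" using finJ TJ finite_subset by blast
  have step: "max 0 (int (r i) - int (card ({j. (i,j)\<in>E} - T))) \<le> int (card {j\<in>T. (i,j)\<in>M})"
    if iI: "i\<in>I" for i
  proof -
    have "r i = card {j. (i,j)\<in>M}" using v iI unfolding valid_def rowc_def by auto
    also have "\<dots> = card ({j. (i,j)\<in>M} \<inter> T) + card ({j. (i,j)\<in>M} - T)"
      by (rule card_Int_Diff[OF row_fin[OF fM]])
    also have "card ({j. (i,j)\<in>M} - T) \<le> card ({j. (i,j)\<in>E} - T)"
      apply (rule card_mono) using Ei_fin apply blast using v unfolding valid_def by auto
    also have "{j. (i,j)\<in>M} \<inter> T = {j\<in>T. (i,j)\<in>M}" by auto
    finally show ?thesis by linarith
  qed
  have "(\<Sum>i\<in>I. max 0 (int (r i) - int (card ({j. (i,j)\<in>E} - T)))) \<le> (\<Sum>i\<in>I. int (card {j\<in>T. (i,j)\<in>M}))"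
    by (rule sum_mono) (rule step)
  also have "\<dots> = int (\<Sum>i\<in>I. card {j\<in>T. (i,j)\<in>M})" by simp
  also have "(\<Sum>i\<in>I. card {j\<in>T. (i,j)\<in>M}) = (\<Sum>j\<in>T. card {i\<in>I. (i,j)\<in>M})"
    by (rule double_count[OF finI fT])
  also have "\<dots> \<le> (\<Sum>j\<in>T. h j)"
  proof (rule sum_mono)
    fix j assume "j \<in> T"
    hence "{i\<in>I. (i,j)\<in>M} = {i. (i,j)\<in>M}" "j \<in> J" using MIJ TJ by auto
    thus "card {i\<in>I. (i,j)\<in>M} \<le> h j" using v unfolding valid_def colc_def by auto
  qed
  finally show "(\<Sum>i\<in>I. max 0 (int (r i) - int (card ({j. (i,j)\<in>E} - T)))) \<le> int (\<Sum>j\<in>T. h j)"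
    by linarith
qed

inductive_set RL :: "(nat\<times>nat) set \<Rightarrow> nat \<Rightarrow> nat set" for M i0 where
  base: "i0 \<in> RL M i0"
| step: "x \<in> RL M i0 \<Longrightarrow> (x,j)\<in>E \<Longrightarrow> (x,j)\<notin>M \<Longrightarrow> (y,j)\<in>M \<Longrightarrow> y \<in> RL M i0"

lemma RL_P: "x \<in> RL M i0 \<Longrightarrow> P M q x \<Longrightarrow> \<exists>q'. P M q' i0"
proof (induction arbitrary: q rule: RL.induct)
  case base thus ?case by blast
next
  case (step x j y)
  have "P M (Suc q) x" using step by auto
  thus ?case using step.IH by blast
qed

lemma cond_mono: "cond r \<Longrightarrow> (\<And>i. r' i \<le> r i) \<Longrightarrow> cond r'"
  unfolding cond_def
proof (intro allI impI)
  fix T assume c: "\<forall>T\<subseteq>J. (\<Sum>i\<in>I. max 0 (int (r i) - int (card ({j. (i, j) \<in> E} - T)))) \<le> int (sum h T)"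
    and le: "\<And>i. r' i \<le> r i" and TJ: "T \<subseteq> J"
  have "(\<Sum>i\<in>I. max 0 (int (r' i) - int (card ({j. (i, j) \<in> E} - T)))) \<le>
        (\<Sum>i\<in>I. max 0 (int (r i) - int (card ({j. (i, j) \<in> E} - T))))"
  proof (rule sum_mono)
    fix i have "int (r' i) \<le> int (r i)" using le[of i] by simp
    thus "max 0 (int (r' i) - int (card ({j. (i, j) \<in> E} - T))) \<le> max 0 (int (r i) - int (card ({j. (i, j) \<in> E} - T)))"
      by linarith
  qed
  also have "\<dots> \<le> int (sum h T)" using c TJ by blast
  finally show "(\<Sum>i\<in>I. max 0 (int (r' i) - int (card ({j. (i, j) \<in> E} - T)))) \<le> int (sum h T)" .
qed

lemma hard_step:
  assumes c: "cond r" and v: "valid r' M" and i0: "i0 \<in> I" and r': "r' = r(i0 := r i0 - 1)"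
    and pos: "r i0 > 0"
  shows "\<exists>M'. valid r M'"
proof (cases "\<exists>q. P M q i0")
  case True
  then obtain q where "P M q i0" by blast
  from aug[OF v this] obtain M' where "valid (r'(i0 := r' i0 + 1)) M'" by blast
  moreover have "r'(i0 := r' i0 + 1) = r" using r' pos by (auto simp: fun_eq_iff)
  ultimately show ?thesis by metis
next
  case False
  have fM: "finite M" using valid_fin[OF v] .
  have MIJ: "M \<subseteq> I \<times> J" using v EIJ unfolding valid_def by auto
  have nP: "\<not> P M q x" if "x \<in> RL M i0" for x q using RL_P[OF that] False by blast
  have RLI: "RL M i0 \<subseteq> I"
  proof
    fix x assume "x \<in> RL M i0" thus "x \<in> I"
      by (induction rule: RL.induct) (use i0 MIJ in auto)
  qed
  define R where "R = RL M i0"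
  have fR: "finite R" using RLI finI finite_subset unfolding R_def by blast
  define T where "T = {j. \<exists>x\<in>R. (x,j)\<in>E \<and> (x,j)\<notin>M}"
  have TJ: "T \<subseteq> J" using EIJ unfolding T_def by auto
  have fT: "finite T" using TJ finJ finite_subset by blast
  have sat: "colc M j = h j" if "j \<in> T" for j
  proof -
    have "j \<in> {j. \<exists>x\<in>R. (x,j)\<in>E \<and> (x,j)\<notin>M}" using that T_def by simp
    then obtain x where x: "x\<in>R" "(x,j)\<in>E" "(x,j)\<notin>M" by blast
    have "\<not> P M 0 x" using nP x(1) unfolding R_def by blast
    hence "colc M j \<ge> h j" using x by auto
    moreover have "colc M j \<le> h j" using v TJ that unfolding valid_def by auto
    ultimately show ?thesis by simp
  qed
  have holders: "y \<in> R" if "j \<in> T" "(y,j)\<in>M" for j y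
    using that unfolding T_def R_def by (auto intro: RL.step)
  have rowR: "card {j\<in>T. (y,j)\<in>M} + card ({j. (y,j)\<in>E} - T) = r' y" if "y \<in> R" for y
  proof -
    have yI: "y \<in> I" using that RLI R_def by auto
    have sub: "{j. (y,j)\<in>E} - T \<subseteq> {j. (y,j)\<in>M}" using that unfolding T_def by auto
    have "r' y = card {j. (y,j)\<in>M}" using v yI unfolding valid_def rowc_def by auto
    also have "\<dots> = card ({j. (y,j)\<in>M} \<inter> T) + card ({j. (y,j)\<in>M} - T)"
      by (rule card_Int_Diff[OF row_fin[OF fM]])
    also have "{j. (y,j)\<in>M} - T = {j. (y,j)\<in>E} - T" using sub v unfolding valid_def by auto
    also have "{j. (y,j)\<in>M} \<inter> T = {j\<in>T. (y,j)\<in>M}" by auto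
    finally show ?thesis by simp
  qed
  have "(\<Sum>j\<in>T. h j) = (\<Sum>j\<in>T. card {y\<in>R. (y,j)\<in>M})"
  proof (rule sum.cong[OF refl])
    fix j assume jT: "j \<in> T"
    have "{y\<in>R. (y,j)\<in>M} = {y. (y,j)\<in>M}" using holders[OF jT] by auto
    thus "h j = card {y\<in>R. (y,j)\<in>M}" using sat[OF jT] unfolding colc_def by simp
  qed
  also have "\<dots> = (\<Sum>y\<in>R. card {j\<in>T. (y,j)\<in>M})" by (rule double_count[symmetric, OF fR fT])
  finally have "int (\<Sum>j\<in>T. h j) = (\<Sum>y\<in>R. int (card {j\<in>T. (y,j)\<in>M}))"
    by (simp only: of_nat_sum)
  also have "\<dots> = (\<Sum>y\<in>R. int (r' y) - int (card ({j. (y,j)\<in>E} - T)))"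
  proof (rule sum.cong[OF refl])
    fix y assume "y \<in> R"
    from rowR[OF this] show "int (card {j\<in>T. (y,j)\<in>M}) = int (r' y) - int (card ({j. (y,j)\<in>E} - T))"
      by linarith
  qed
  finally have hT: "int (\<Sum>j\<in>T. h j) = (\<Sum>y\<in>R. int (r' y) - int (card ({j. (y,j)\<in>E} - T)))" .
  have i0R: "i0 \<in> R" unfolding R_def by (rule RL.base)
  have "(\<Sum>y\<in>R. int (r y) - int (card ({j. (y,j)\<in>E} - T)))
     = (\<Sum>y\<in>R. int (r' y) - int (card ({j. (y,j)\<in>E} - T))) + 1"
  proof -
    have "(\<Sum>y\<in>R. int (r y) - int (card ({j. (y,j)\<in>E} - T)))
       = (int (r i0) - int (card ({j. (i0,j)\<in>E} - T))) + (\<Sum>y\<in>R-{i0}. int (r y) - int (card ({j. (y,j)\<in>E} - T)))"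
      by (rule sum.remove[OF fR i0R])
    moreover have "(\<Sum>y\<in>R. int (r' y) - int (card ({j. (y,j)\<in>E} - T)))
       = (int (r' i0) - int (card ({j. (i0,j)\<in>E} - T))) + (\<Sum>y\<in>R-{i0}. int (r' y) - int (card ({j. (y,j)\<in>E} - T)))"
      by (rule sum.remove[OF fR i0R])
    moreover have "(\<Sum>y\<in>R-{i0}. int (r' y) - int (card ({j. (y,j)\<in>E} - T))) = (\<Sum>y\<in>R-{i0}. int (r y) - int (card ({j. (y,j)\<in>E} - T)))"
      using r' by (intro sum.cong) auto
    ultimately show ?thesis using r' pos by simp
  qed
  also have "\<dots> = int (\<Sum>j\<in>T. h j) + 1" using hT by simp
  finally have big: "(\<Sum>y\<in>R. int (r y) - int (card ({j. (y,j)\<in>E} - T))) = int (\<Sum>j\<in>T. h j) + 1" .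
  have "(\<Sum>y\<in>R. int (r y) - int (card ({j. (y,j)\<in>E} - T))) \<le> (\<Sum>y\<in>R. max 0 (int (r y) - int (card ({j. (y,j)\<in>E} - T))))"
    by (rule sum_mono) simp
  also have "\<dots> \<le> (\<Sum>y\<in>I. max 0 (int (r y) - int (card ({j. (y,j)\<in>E} - T))))"
    by (rule sum_mono2[OF finI]) (use RLI R_def in auto)
  also have "\<dots> \<le> int (\<Sum>j\<in>T. h j)" using c TJ unfolding cond_def by blast
  finally show ?thesis using big by simp
qed

lemma hard: "cond r \<Longrightarrow> \<exists>M. valid r M"
proof (induction "sum r I" arbitrary: r)
  case 0
  hence "\<forall>i\<in>I. r i = 0" using finI by simp
  thus ?case unfolding valid_def rowc_def colc_def by (intro exI[of _ "{}"]) auto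
next
  case (Suc s)
  then obtain i0 where i0: "i0 \<in> I" "r i0 > 0"
    by (metis gr0I sum.neutral zero_neq_one Zero_not_Suc)
  define r' where "r' = r(i0 := r i0 - 1)"
  have "sum r I = sum r' I + 1"
  proof -
    have "sum r I = r i0 + sum r (I - {i0})" by (rule sum.remove[OF finI i0(1)])
    moreover have "sum r' I = r' i0 + sum r' (I - {i0})" by (rule sum.remove[OF finI i0(1)])
    moreover have "sum r' (I - {i0}) = sum r (I - {i0})" unfolding r'_def by (intro sum.cong) auto
    ultimately show ?thesis using i0 unfolding r'_def by simp
  qed
  hence "s = sum r' I" using Suc.hyps(2) by simp
  moreover have "cond r'" using cond_mono[OF Suc.prems] unfolding r'_def by auto
  ultimately obtain M where "valid r' M" using Suc.hyps(1) by blast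
  thus ?case using hard_step[OF Suc.prems _ i0(1) r'_def i0(2)] by blast
qed

lemma main_gen: "(\<exists>M. valid r M) \<longleftrightarrow> cond r"
  using easy hard by blast

end


lemma nb_mono:
  fixes nb :: "nat \<Rightarrow> nat" and \<kappa> \<kappa>' nu :: nat
  assumes st: "\<And>\<kappa>. \<kappa> < nu \<Longrightarrow> nb \<kappa> < nb (\<kappa> + 1)"
  shows "\<kappa> \<le> \<kappa>' \<Longrightarrow> \<kappa>' \<le> nu \<Longrightarrow> nb \<kappa> \<le> (nb::nat\<Rightarrow>nat) \<kappa>'"
proof (induction \<kappa>')
  case 0 thus ?case by simp
next
  case (Suc k)
  show ?case
  proof (cases "\<kappa> = Suc k")
    case True thus ?thesis by simp
  next
    case False
    hence "nb \<kappa> \<le> nb k" using Suc by simp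
    also have "nb k < nb (k+1)" using st Suc.prems by simp
    finally show ?thesis by simp
  qed
qed

lemma decomp:
  fixes nb :: "nat \<Rightarrow> nat" and a d nu :: nat
  assumes st: "\<And>\<kappa>. \<kappa> < nu \<Longrightarrow> nb \<kappa> < nb (\<kappa> + 1)"
  shows "a \<le> d \<Longrightarrow> d \<le> nu \<Longrightarrow> (\<Sum>j\<in>{nb a+1..nb d} \<inter> T. (f::nat\<Rightarrow>nat) j)
     = (\<Sum>\<kappa>=a+1..d. \<Sum>j\<in>{nb (\<kappa>-1)+1..nb \<kappa>} \<inter> T. f j)"
proof (induction d)
  case 0 thus ?case by simp
next
  case (Suc d)
  show ?case
  proof (cases "a = Suc d")
    case True thus ?thesis by simp
  next
    case False
    hence ad: "a \<le> d" using Suc.prems by simp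
    have m1: "nb a \<le> nb d" by (rule nb_mono[where nb=nb and nu=nu]) (use st ad Suc.prems in auto)
    have m2: "nb d \<le> nb (Suc d)" using st[of d] Suc.prems by simp
    have "{nb a+1..nb (Suc d)} \<inter> T = ({nb a+1..nb d} \<inter> T) \<union> ({nb d+1..nb (Suc d)} \<inter> T)"
      using m1 m2 by auto
    hence "(\<Sum>j\<in>{nb a+1..nb (Suc d)} \<inter> T. f j) = (\<Sum>j\<in>{nb a+1..nb d} \<inter> T. f j) + (\<Sum>j\<in>{nb d+1..nb (Suc d)} \<inter> T. f j)"
      by (simp add: sum.union_disjoint[symmetric] Int_Un_distrib2 ivl_disj_int)
        (subst sum.union_disjoint[symmetric]; auto)
    also have "(\<Sum>j\<in>{nb a+1..nb d} \<inter> T. f j) = (\<Sum>\<kappa>=a+1..d. \<Sum>j\<in>{nb (\<kappa>-1)+1..nb \<kappa>} \<inter> T. f j)"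
      using Suc ad by simp
    finally show ?thesis using ad by (simp add: sum.cl_ivl_Suc)
  qed
qed

lemma block:
  fixes h :: "nat \<Rightarrow> nat"
  shows "(\<forall>i j. lo+1 \<le> i \<longrightarrow> i < j \<longrightarrow> j \<le> hi \<longrightarrow> h j \<le> h i) \<Longrightarrow> S \<subseteq> {lo+1..hi}
   \<Longrightarrow> (\<Sum>j\<in>{hi - card S + 1..hi}. h j) \<le> sum h S"
proof (induction hi arbitrary: S)
  case 0 thus ?case by auto
next
  case (Suc hi)
  have mono': "\<forall>i j. lo+1 \<le> i \<longrightarrow> i < j \<longrightarrow> j \<le> hi \<longrightarrow> h j \<le> h i" using Suc.prems(1) by auto
  have fS: "finite S" using Suc.prems(2) finite_subset by blast
  show ?case
  proof (cases "Suc hi \<in> S")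
    case True
    define S' where "S' = S - {Suc hi}"
    have S'sub: "S' \<subseteq> {lo+1..hi}" using Suc.prems(2) unfolding S'_def by auto
    have cS: "card S = Suc (card S')" unfolding S'_def using card_Suc_Diff1[OF fS True] by simp
    have "card S' \<le> card {lo+1..hi}" using S'sub by (intro card_mono) auto
    hence cS': "card S' \<le> hi" by simp
    have IH: "(\<Sum>j\<in>{hi - card S' + 1..hi}. h j) \<le> sum h S'" using Suc.IH[OF mono' S'sub] .
    have "(\<Sum>j\<in>{Suc hi - card S + 1..Suc hi}. h j) = (\<Sum>j\<in>{hi - card S' + 1..Suc hi}. h j)"
      using cS cS' by simp
    also have "\<dots> = (\<Sum>j\<in>{hi - card S' + 1..hi}. h j) + h (Suc hi)"
      by (auto simp add: sum.cl_ivl_Suc)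
    also have "sum h S = h (Suc hi) + sum h S'" unfolding S'_def by (rule sum.remove[OF fS True])
    ultimately show ?thesis using IH by simp
  next
    case False
    have Ssub: "S \<subseteq> {lo+1..hi}"
    proof
      fix x assume "x \<in> S"
      thus "x \<in> {lo+1..hi}" using Suc.prems(2) False by (cases "x = Suc hi") auto
    qed
    have "card S \<le> card {lo+1..hi}" using Ssub by (intro card_mono) auto
    hence cS: "card S \<le> hi - lo" by simp
    have IH: "(\<Sum>j\<in>{hi - card S + 1..hi}. h j) \<le> sum h S" using Suc.IH[OF mono' Ssub] .
    show ?thesis
    proof (cases "card S = 0")
      case True thus ?thesis by simp
    next
      case False
      have "Suc hi - card S + 1 = Suc (hi - card S + 1)" using cS False by simp
      hence "(\<Sum>j\<in>{Suc hi - card S + 1..Suc hi}. h j) = (\<Sum>j\<in>{Suc (hi - card S + 1)..Suc hi}. h j)"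
        by (simp only:)
      also have "\<dots> = (\<Sum>i\<in>{hi - card S + 1..hi}. h (Suc i))"
        by (rule sum.shift_bounds_cl_Suc_ivl)
      also have "\<dots> \<le> (\<Sum>i\<in>{hi - card S + 1..hi}. h i)"
      proof (rule sum_mono)
        fix i assume "i \<in> {hi - card S + 1..hi}"
        thus "h (Suc i) \<le> h i" using Suc.prems(1) cS False by auto
      qed
      finally show ?thesis using IH by simp
    qed
  qed
qed


theorem theorem1:
  fixes n nu m :: nat and nb h r a d :: "nat \<Rightarrow> nat"
  assumes "1 \<le> nu" and "nu \<le> n"
    and "nb 0 = 0" and "nb nu = n"
    and "\<And>\<kappa>. \<kappa> < nu \<Longrightarrow> nb \<kappa> < nb (\<kappa> + 1)"
    and "1 \<le> m"
    and "\<And>i. i \<in> {1..m} \<Longrightarrow> a i < d i \<and> d i \<le> nu"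
    and "\<And>i. i \<in> {1..m} \<Longrightarrow> 0 < r i \<and> r i \<le> nb (d i) - nb (a i)"
    and "\<And>\<kappa> i j. \<kappa> \<in> {1..nu} \<Longrightarrow> nb (\<kappa> - 1) + 1 \<le> i \<Longrightarrow> i < j \<Longrightarrow> j \<le> nb \<kappa>
           \<Longrightarrow> h i \<ge> h j"
  shows "adequate n m nb h r a d \<longleftrightarrow>
    (\<forall>k :: nat \<Rightarrow> nat. (\<forall>\<kappa>\<in>{1..nu}. k \<kappa> \<le> nb \<kappa> - nb (\<kappa> - 1))
        \<longrightarrow> structure_tensor nu m nb k h r a d \<ge> 0)"
proof -
  note st = assms(5)
  have mono: "nb x \<le> nb y" if "x \<le> y" "y \<le> nu" for x y
    by (rule nb_mono[where nb=nb and nu=nu]) (use st that in auto)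
  have nbn: "nb x \<le> n" if "x \<le> nu" for x using mono[OF that order.refl] assms(4) by simp
  define I where "I = {1..m}"
  define J where "J = {1..n}"
  define E where "E = {(i,j). i\<in>{1..m} \<and> j\<in>{nb (a i)+1..nb (d i)}}"
  have EIJ: "E \<subseteq> I \<times> J"
  proof
    fix p assume "p \<in> E"
    then obtain i j where p: "p = (i,j)" "i\<in>{1..m}" "j\<in>{nb (a i)+1..nb (d i)}" unfolding E_def by auto
    have "nb (d i) \<le> n" using nbn assms(7)[OF p(2)] by simp
    thus "p \<in> I \<times> J" using p unfolding I_def J_def by auto
  qed
  interpret B: bip I J E h using EIJ unfolding bip_def I_def J_def by auto
  have Ei: "{j. (i,j)\<in>E} = {nb (a i)+1..nb (d i)}" if "i \<in> {1..m}" for i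
    using that unfolding E_def by auto
  have ad: "adequate n m nb h r a d \<longleftrightarrow> (\<exists>M. B.valid r M)"
  proof
    assume "adequate n m nb h r a d"
    then obtain A where A: "\<forall>i\<in>{1..m}. \<forall>j\<in>{1..n}. A i j \<in> {0, 1}"
      "\<forall>i\<in>{1..m}. (\<Sum>j=1..n. A i j) = r i"
      "\<forall>i\<in>{1..m}. \<forall>j\<in>{1..n}. j \<notin> {nb (a i) + 1 .. nb (d i)} \<longrightarrow> A i j = 0"
      "\<forall>j\<in>{1..n}. (\<Sum>i=1..m. A i j) \<le> h j"
      unfolding adequate_def by blast
    define M where "M = {(i,j). i\<in>{1..m} \<and> j\<in>{1..n} \<and> A i j = 1}"
    have "B.valid r M" unfolding B.valid_def
    proof (intro conjI ballI)
      show "M \<subseteq> E" using A(3) unfolding M_def E_def by fastforce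
    next
      fix i assume iI: "i \<in> I"
      have "{j. (i,j)\<in>M} = {j\<in>{1..n}. A i j = 1}" using iI unfolding M_def I_def by auto
      hence "rowc M i = (\<Sum>j=1..n. if A i j = 1 then 1 else 0)" unfolding rowc_def
        by (simp only:) (rule card_filter_sum, simp)
      also have "\<dots> = (\<Sum>j=1..n. A i j)"
        by (rule sum.cong[OF refl]) (use A(1) iI I_def in force)
      finally show "rowc M i = r i" using A(2) iI I_def by simp
    next
      fix j assume jJ: "j \<in> J"
      have "{i. (i,j)\<in>M} = {i\<in>{1..m}. A i j = 1}" using jJ unfolding M_def J_def by auto
      hence "colc M j = (\<Sum>i=1..m. if A i j = 1 then 1 else 0)" unfolding colc_def
        by (simp only:) (rule card_filter_sum, simp)
      also have "\<dots> = (\<Sum>i=1..m. A i j)"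
        by (rule sum.cong[OF refl]) (use A(1) jJ J_def in force)
      finally show "colc M j \<le> h j" using A(4) jJ J_def by simp
    qed
    thus "\<exists>M. B.valid r M" by blast
  next
    assume "\<exists>M. B.valid r M"
    then obtain M where v: "B.valid r M" by blast
    have MIJ: "M \<subseteq> I \<times> J" using v EIJ unfolding B.valid_def by auto
    define A where "A = (\<lambda>i j. if (i,j)\<in>M then 1 else (0::nat))"
    show "adequate n m nb h r a d" unfolding adequate_def
    proof (intro exI[of _ A] conjI ballI impI)
      fix i j show "A i j \<in> {0,1}" unfolding A_def by auto
    next
      fix i assume iI: "i \<in> {1..m}"
      have "(\<Sum>j=1..n. A i j) = card {j\<in>{1..n}. (i,j)\<in>M}" unfolding A_def
        by (rule card_filter_sum[symmetric]) simp
      also have "{j\<in>{1..n}. (i,j)\<in>M} = {j. (i,j)\<in>M}" using MIJ J_def by auto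
      finally show "(\<Sum>j=1..n. A i j) = r i" using v iI I_def unfolding B.valid_def rowc_def by simp
    next
      fix i j assume "i \<in> {1..m}" "j \<in> {1..n}" "j \<notin> {nb (a i) + 1..nb (d i)}"
      hence "(i,j) \<notin> E" unfolding E_def by auto
      thus "A i j = 0" using v unfolding A_def B.valid_def by auto
    next
      fix j assume jJ: "j \<in> {1..n}"
      have "(\<Sum>i=1..m. A i j) = card {i\<in>{1..m}. (i,j)\<in>M}" unfolding A_def
        by (rule card_filter_sum[symmetric]) simp
      also have "{i\<in>{1..m}. (i,j)\<in>M} = {i. (i,j)\<in>M}" using MIJ I_def by auto
      finally show "(\<Sum>i=1..m. A i j) \<le> h j" using v jJ J_def unfolding B.valid_def colc_def by simp
    qed
  qed
  define Bk where "Bk = (\<lambda>\<kappa>. {nb (\<kappa>-1)+1..nb \<kappa>})"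
  have cardlem: "card ({j. (i,j)\<in>E} - T) = (\<Sum>\<kappa>=a i+1..d i. card (Bk \<kappa> - T))"
    if iI: "i \<in> {1..m}" for i T
  proof -
    have ad': "a i \<le> d i" "d i \<le> nu" using assms(7)[OF iI] by auto
    have "card ({j. (i,j)\<in>E} - T) = (\<Sum>j\<in>{nb (a i)+1..nb (d i)} \<inter> -T. (1::nat))"
      using Ei[OF iI] by (simp add: Diff_eq)
    also have "\<dots> = (\<Sum>\<kappa>=a i+1..d i. \<Sum>j\<in>{nb (\<kappa>-1)+1..nb \<kappa>} \<inter> -T. (1::nat))"
      by (rule decomp[where nb=nb and nu=nu, OF st ad'])
    also have "\<dots> = (\<Sum>\<kappa>=a i+1..d i. card (Bk \<kappa> - T))" unfolding Bk_def by (simp add: Diff_eq)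
    finally show ?thesis .
  qed
  have sumlem: "(\<Sum>j\<in>T. h j) = (\<Sum>\<kappa>=1..nu. \<Sum>j\<in>Bk \<kappa> \<inter> T. h j)" if TJ: "T \<subseteq> J" for T
  proof -
    have eqT: "{nb 0+1..nb nu} \<inter> T = T" using TJ assms(3,4) unfolding J_def by auto
    have "(\<Sum>j\<in>{nb 0+1..nb nu} \<inter> T. h j) = (\<Sum>\<kappa>=0+1..nu. \<Sum>j\<in>{nb (\<kappa>-1)+1..nb \<kappa>} \<inter> T. h j)"
      by (rule decomp[where nb=nb and nu=nu, OF st]) auto
    thus ?thesis unfolding Bk_def eqT by simp
  qed
  have cd: "B.cond r \<longleftrightarrow> (\<forall>k :: nat \<Rightarrow> nat. (\<forall>\<kappa>\<in>{1..nu}. k \<kappa> \<le> nb \<kappa> - nb (\<kappa> - 1))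
        \<longrightarrow> structure_tensor nu m nb k h r a d \<ge> 0)"
  proof
    assume c: "B.cond r"
    show "\<forall>k :: nat \<Rightarrow> nat. (\<forall>\<kappa>\<in>{1..nu}. k \<kappa> \<le> nb \<kappa> - nb (\<kappa> - 1))
        \<longrightarrow> structure_tensor nu m nb k h r a d \<ge> 0"
    proof (intro allI impI)
      fix k :: "nat \<Rightarrow> nat" assume kb: "\<forall>\<kappa>\<in>{1..nu}. k \<kappa> \<le> nb \<kappa> - nb (\<kappa> - 1)"
      define T where "T = {j\<in>{1..n}. \<exists>\<kappa>\<in>{1..nu}. nb (\<kappa>-1)+k \<kappa>+1 \<le> j \<and> j \<le> nb \<kappa>}"
      have TJ: "T \<subseteq> J" unfolding T_def J_def by auto
      have disj: "\<kappa> = \<kappa>'" if "\<kappa>\<in>{1..nu}" "\<kappa>'\<in>{1..nu}" "j \<in> Bk \<kappa>" "j \<in> Bk \<kappa>'" for \<kappa> \<kappa>' j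
      proof (rule ccontr)
        assume "\<kappa> \<noteq> \<kappa>'"
        then consider "\<kappa> < \<kappa>'" | "\<kappa>' < \<kappa>" by linarith
        thus False
        proof cases
          case 1
          have "nb \<kappa> \<le> nb (\<kappa>'-1)" by (rule mono) (use 1 that(2) in auto)
          moreover have "j \<le> nb \<kappa>" "nb (\<kappa>'-1)+1 \<le> j" using that(3,4) unfolding Bk_def by simp_all
          ultimately show False by linarith
        next
          case 2
          have "nb \<kappa>' \<le> nb (\<kappa>-1)" by (rule mono) (use 2 that(1) in auto)
          moreover have "j \<le> nb \<kappa>'" "nb (\<kappa>-1)+1 \<le> j" using that(3,4) unfolding Bk_def by simp_all
          ultimately show False by linarith
        qed
      qed
      have nbk: "nb (\<kappa>-1) \<le> nb \<kappa>" if "\<kappa> \<le> nu" for \<kappa> using mono[of "\<kappa>-1" \<kappa>] that by auto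
      have f1: "Bk \<kappa> \<inter> T = {nb (\<kappa>-1)+k \<kappa>+1..nb \<kappa>}" if kI: "\<kappa>\<in>{1..nu}" for \<kappa>
      proof (intro set_eqI iffI)
        fix j assume jBT: "j \<in> Bk \<kappa> \<inter> T"
        hence jB: "j \<in> Bk \<kappa>" and jT: "j \<in> T" by auto
        from jT obtain \<kappa>' where k': "\<kappa>'\<in>{1..nu}" "nb (\<kappa>'-1)+k \<kappa>'+1 \<le> j" "j \<le> nb \<kappa>'"
          unfolding T_def by blast
        have "j \<in> Bk \<kappa>'" using k'(2,3) unfolding Bk_def by simp
        hence "\<kappa> = \<kappa>'" by (rule disj[OF kI k'(1) jB])
        thus "j \<in> {nb (\<kappa>-1)+k \<kappa>+1..nb \<kappa>}" using k' by simp
      next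
        fix j assume j: "j \<in> {nb (\<kappa>-1)+k \<kappa>+1..nb \<kappa>}"
        have nk: "nb \<kappa> \<le> n" using nbn kI by auto
        have "j \<in> T" unfolding T_def
          by (rule CollectI, rule conjI, use j nk in simp, rule bexI[of _ \<kappa>]) (use j kI in auto)
        moreover have "j \<in> Bk \<kappa>" using j unfolding Bk_def by simp
        ultimately show "j \<in> Bk \<kappa> \<inter> T" by blast
      qed
      have f2: "card (Bk \<kappa> - T) = k \<kappa>" if kI: "\<kappa>\<in>{1..nu}" for \<kappa>
      proof -
        have le: "nb (\<kappa>-1) + k \<kappa> \<le> nb \<kappa>" using kb kI nbk[of \<kappa>] by force
        have "Bk \<kappa> - T = Bk \<kappa> - (Bk \<kappa> \<inter> T)" by auto
        also have "\<dots> = {nb (\<kappa>-1)+1..nb \<kappa>} - {nb (\<kappa>-1)+k \<kappa>+1..nb \<kappa>}"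
          unfolding f1[OF kI] by (simp only: Bk_def)
        also have "\<dots> = {nb (\<kappa>-1)+1..nb (\<kappa>-1)+k \<kappa>}" using le by auto
        finally show ?thesis by simp
      qed
      have hT: "(\<Sum>j\<in>T. h j) = (\<Sum>\<kappa>=1..nu. \<Sum>j=nb (\<kappa>-1)+k \<kappa>+1..nb \<kappa>. h j)"
        using sumlem[OF TJ] f1 by simp
      have cE: "card ({j. (i,j)\<in>E} - T) = (\<Sum>\<kappa>=a i+1..d i. k \<kappa>)" if iI: "i \<in> {1..m}" for i
      proof -
        have "card ({j. (i,j)\<in>E} - T) = (\<Sum>\<kappa>=a i+1..d i. card (Bk \<kappa> - T))" by (rule cardlem[OF iI])
        also have "\<dots> = (\<Sum>\<kappa>=a i+1..d i. k \<kappa>)"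
          by (rule sum.cong[OF refl], rule f2) (use assms(7)[OF iI] in auto)
        finally show ?thesis .
      qed
      have "(\<Sum>i\<in>I. max 0 (int (r i) - int (card ({j. (i,j)\<in>E} - T)))) \<le> int (\<Sum>j\<in>T. h j)"
        using c TJ unfolding B.cond_def by blast
      moreover have "(\<Sum>i\<in>I. max 0 (int (r i) - int (card ({j. (i,j)\<in>E} - T))))
          = (\<Sum>i=1..m. max 0 (int (r i) - (\<Sum>\<kappa>=a i+1..d i. int (k \<kappa>))))"
        unfolding I_def by (rule sum.cong[OF refl]) (simp add: cE of_nat_sum)
      moreover have "int (\<Sum>j\<in>T. h j) = (\<Sum>\<kappa>=1..nu. \<Sum>j=nb (\<kappa>-1)+k \<kappa>+1..nb \<kappa>. int (h j))"
        unfolding hT by (simp add: of_nat_sum)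
      ultimately show "structure_tensor nu m nb k h r a d \<ge> 0"
        unfolding structure_tensor_def by linarith
    qed
  next
    assume W: "\<forall>k :: nat \<Rightarrow> nat. (\<forall>\<kappa>\<in>{1..nu}. k \<kappa> \<le> nb \<kappa> - nb (\<kappa> - 1))
        \<longrightarrow> structure_tensor nu m nb k h r a d \<ge> 0"
    show "B.cond r" unfolding B.cond_def
    proof (intro allI impI)
      fix T assume TJ: "T \<subseteq> J"
      define k where "k = (\<lambda>\<kappa>. card (Bk \<kappa> - T))"
      have kb: "\<forall>\<kappa>\<in>{1..nu}. k \<kappa> \<le> nb \<kappa> - nb (\<kappa> - 1)"
      proof
        fix \<kappa> assume "\<kappa> \<in> {1..nu}"
        have "card (Bk \<kappa> - T) \<le> card (Bk \<kappa>)" unfolding Bk_def by (rule card_mono) auto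
        thus "k \<kappa> \<le> nb \<kappa> - nb (\<kappa> - 1)" unfolding k_def Bk_def by simp
      qed
      have W0: "structure_tensor nu m nb k h r a d \<ge> 0" using W kb by blast
      have tail: "(\<Sum>j=nb (\<kappa>-1)+k \<kappa>+1..nb \<kappa>. h j) \<le> (\<Sum>j\<in>Bk \<kappa> \<inter> T. h j)" if kI: "\<kappa>\<in>{1..nu}" for \<kappa>
      proof -
        have le: "nb (\<kappa>-1) \<le> nb \<kappa>" using mono[of "\<kappa>-1" \<kappa>] kI by auto
        have "card (Bk \<kappa>) = card (Bk \<kappa> \<inter> T) + card (Bk \<kappa> - T)"
          by (rule card_Int_Diff) (simp add: Bk_def)
        hence cs: "card (Bk \<kappa> \<inter> T) + k \<kappa> = nb \<kappa> - nb (\<kappa>-1)" unfolding k_def Bk_def by simp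
        have "(\<Sum>j\<in>{nb \<kappa> - card (Bk \<kappa> \<inter> T) + 1..nb \<kappa>}. h j) \<le> sum h (Bk \<kappa> \<inter> T)"
        proof (rule block)
          show "\<forall>i j. nb (\<kappa>-1) + 1 \<le> i \<longrightarrow> i < j \<longrightarrow> j \<le> nb \<kappa> \<longrightarrow> h j \<le> h i"
            using assms(9)[OF kI] by blast
          show "Bk \<kappa> \<inter> T \<subseteq> {nb (\<kappa>-1) + 1..nb \<kappa>}" unfolding Bk_def by blast
        qed
        moreover have "nb \<kappa> - card (Bk \<kappa> \<inter> T) + 1 = nb (\<kappa>-1)+k \<kappa>+1" using cs le by linarith
        ultimately show ?thesis by (simp only:)
      qed
      have "(\<Sum>\<kappa>=1..nu. \<Sum>j=nb (\<kappa>-1)+k \<kappa>+1..nb \<kappa>. h j) \<le> (\<Sum>\<kappa>=1..nu. \<Sum>j\<in>Bk \<kappa> \<inter> T. h j)"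
        by (rule sum_mono) (rule tail)
      hence hT: "(\<Sum>\<kappa>=1..nu. \<Sum>j=nb (\<kappa>-1)+k \<kappa>+1..nb \<kappa>. int (h j)) \<le> int (\<Sum>j\<in>T. h j)"
        unfolding sumlem[OF TJ] by (simp only: of_nat_sum[symmetric] of_nat_le_iff)
      have "(\<Sum>i\<in>I. max 0 (int (r i) - int (card ({j. (i,j)\<in>E} - T))))
          = (\<Sum>i=1..m. max 0 (int (r i) - (\<Sum>\<kappa>=a i+1..d i. int (k \<kappa>))))"
        unfolding I_def by (rule sum.cong[OF refl]) (simp add: cardlem k_def of_nat_sum)
      thus "(\<Sum>i\<in>I. max 0 (int (r i) - int (card ({j. (i,j)\<in>E} - T)))) \<le> int (\<Sum>j\<in>T. h j)"
        using W0 hT unfolding structure_tensor_def by linarith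
    qed
  qed
  show ?thesis by (simp only: ad B.main_gen cd)
qed

end
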